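(* Let $D\in(0,2)$ and let $\gamma$ satisfy $0<\gamma<2-D$. Let $u_1,u_2,\dots,u_j\in[0,1]$ be arbitrary. Define the SF-OGD sequence $\epsilon_1,\epsilon_2,\dots$ as follows: $\epsilon_1\in[-D-\gamma,\,D+\gamma]$, and for $\tau\ge 1$, with $E_\tau=D\cdot\mathrm{sign}(u_\tau-0.5)$, $$g_\tau=\nabla_\epsilon L(E_\tau,\epsilon_\tau)=-\begin{cases}0 & \text{if } E_\tau\epsilon_\tau>0 \text{ and } |\epsilon_\tau|>D,\\[2pt] \dfrac{u_\tau-0.5}{1+\epsilon_\tau(u_\tau-0.5)} & \text{otherwise,}\end{cases}$$ $$\epsilon_{\tau+1}=\epsilon_\tau-\gamma\,\frac{g_\tau}{\sqrt{\sum_{t=1}^{\tau} g_t^2}}$$ (the update term being $0$ when $g_\tau=0$). Then $\epsilon_\tau\in[-D-\gamma,\,D+\gamma]$ for all $1\le\tau\le j$.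
   Context: This is the scale-free online gradient descent (SF-OGD) scheme for learning a betting variable $\epsilon_\tau$ in the wealth process $S_\tau=S_{\tau-1}(1+\epsilon_\tau(u_\tau-0.5))$. The gradient $g_\tau$ is the (sub)gradient in $\epsilon$ of the clip-aware loss $L(E_\tau,\epsilon)=-\log(1+E_\tau(u_\tau-0.5))$ if $E_\tau\epsilon>0$ and $|\epsilon|>D$, and $L(E_\tau,\epsilon)=-\log(1+\epsilon(u_\tau-0.5))$ otherwise. *)

theory Defs
  imports Complex_Main
begin

definition sf_grad :: "real \<Rightarrow> real \<Rightarrow> real \<Rightarrow> real" where
  "sf_grad D u e =
     (let E = D * sgn (u - 1/2) in
      - (if E * e > 0 \<and> \<bar>e\<bar> > D then 0 else (u - 1/2) / (1 + e * (u - 1/2))))"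

end

theory Submission
  imports Defs
begin

lemma step_ok:
  fixes D \<gamma> u e S :: real
  assumes D: "0 < D" "D < 2" and g: "0 < \<gamma>" "\<gamma> < 2 - D"
    and u: "u \<in> {0..1}" and e: "e \<in> {-D-\<gamma>..D+\<gamma>}"
    and S: "(sf_grad D u e)\<^sup>2 \<le> S"
  shows "e - (if sf_grad D u e = 0 then 0 else \<gamma> * sf_grad D u e / sqrt S) \<in> {-D-\<gamma>..D+\<gamma>}"
proof (cases "sf_grad D u e = 0")
  case True then show ?thesis using e by simp
next
  case False
  define gr where "gr = sf_grad D u e"
  define c where "c = u - 1/2"
  have gne: "gr \<noteq> 0" using False gr_def by simp
  have Spos: "0 < S" using S gne gr_def by (smt (verit) zero_less_power2)
  have sq: "\<bar>gr\<bar> \<le> sqrt S" using S gr_def real_sqrt_le_mono[of "gr^2" S] by simp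
  have sqp: "0 < sqrt S" using Spos by simp
  define s where "s = \<gamma> * gr / sqrt S"
  have sabs: "\<bar>s\<bar> \<le> \<gamma>"
  proof -
    have "\<bar>s\<bar> = \<gamma> * (\<bar>gr\<bar> / sqrt S)" using g sqp by (simp add: s_def abs_mult)
    also have "\<bar>gr\<bar> / sqrt S \<le> 1" using sq sqp by simp
    hence "\<gamma> * (\<bar>gr\<bar> / sqrt S) \<le> \<gamma> * 1" using g by (intro mult_left_mono) auto
    hence "\<gamma> * (\<bar>gr\<bar> / sqrt S) \<le> \<gamma>" by (simp only: mult_1_right)
    finally show ?thesis .
  qed
  have ssign_pos: "gr > 0 \<Longrightarrow> s \<ge> 0" using g sqp by (simp add: s_def)
  have ssign_neg: "gr < 0 \<Longrightarrow> s \<le> 0" using g sqp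
    by (simp add: s_def mult_pos_neg divide_nonpos_pos less_imp_le)
  have c: "-1/2 \<le> c" "c \<le> 1/2" using u by (auto simp: c_def)
  have den: "1 + e * c > 0"
  proof -
    have "\<bar>e\<bar> < 2" using e g by auto
    moreover have "\<bar>c\<bar> \<le> 1/2" using c by auto
    ultimately have "\<bar>e\<bar> * \<bar>c\<bar> \<le> \<bar>e\<bar> * (1/2)"
      by (intro mult_left_mono) auto
    hence "\<bar>e * c\<bar> < 1" using \<open>\<bar>e\<bar> < 2\<close> by (simp add: abs_mult)
    thus ?thesis by auto
  qed
  have gform: "gr = - (if D * sgn c * e > 0 \<and> \<bar>e\<bar> > D then 0 else c / (1 + e * c))"
    by (simp add: gr_def c_def sf_grad_def Let_def)
  have res: "e - s \<in> {-D-\<gamma>..D+\<gamma>}"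
  proof (cases "\<bar>e\<bar> \<le> D")
    case True then show ?thesis using sabs by auto
  next
    case ab: False
    show ?thesis
    proof (cases "e > 0")
      case True
      have "c < 0"
      proof (rule ccontr)
        assume "\<not> c < 0"
        then consider "c = 0" | "c > 0" by linarith
        then show False
        proof cases
          case 1 then show False using gform gne by simp
        next
          case 2 then have "D * sgn c * e > 0" using True D by simp
          then show False using gform gne ab by simp
        qed
      qed
      hence "D * sgn c * e \<le> 0" using True D by (simp add: mult_nonneg_nonneg)
      hence "gr = - (c / (1 + e * c))" using gform by simp
      hence "gr > 0" using \<open>c < 0\<close> den by (simp add: divide_neg_pos)
      hence "s \<ge> 0" by (rule ssign_pos)
      then show ?thesis using sabs e ab True D by auto
    next
      case False
      hence en: "e < 0" using ab D by auto
      have "c > 0"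
      proof (rule ccontr)
        assume "\<not> c > 0"
        then consider "c = 0" | "c < 0" by linarith
        then show False
        proof cases
          case 1 then show False using gform gne by simp
        next
          case 2 then have "D * sgn c * e > 0" using en D by (simp add: mult_neg_neg mult_pos_neg)
          then show False using gform gne ab by simp
        qed
      qed
      hence "D * sgn c * e \<le> 0" using en D by (simp add: mult_nonneg_nonpos)
      hence "gr = - (c / (1 + e * c))" using gform by simp
      hence "gr < 0" using \<open>c > 0\<close> den by simp
      hence "s \<le> 0" by (rule ssign_neg)
      then show ?thesis using sabs e ab en D by auto
    qed
  qed
  then show ?thesis using False by (simp add: s_def gr_def)
qed

theorem lemma1:
  fixes D \<gamma> :: real and j :: nat and u \<epsilon> :: "nat \<Rightarrow> real"
  assumes "0 < D" "D < 2"
    and "0 < \<gamma>" "\<gamma> < 2 - D"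
    and "\<forall>\<tau>. 1 \<le> \<tau> \<and> \<tau> \<le> j \<longrightarrow> u \<tau> \<in> {0..1}"
    and "\<epsilon> 1 \<in> {-D-\<gamma>..D+\<gamma>}"
    and "\<forall>\<tau>. 1 \<le> \<tau> \<and> \<tau> < j \<longrightarrow>
           \<epsilon> (\<tau> + 1) = \<epsilon> \<tau> -
             (if sf_grad D (u \<tau>) (\<epsilon> \<tau>) = 0 then 0
              else \<gamma> * sf_grad D (u \<tau>) (\<epsilon> \<tau>) /
                   sqrt (\<Sum>t=1..\<tau>. (sf_grad D (u t) (\<epsilon> t))\<^sup>2))"
  shows "\<forall>\<tau>. 1 \<le> \<tau> \<and> \<tau> \<le> j \<longrightarrow> \<epsilon> \<tau> \<in> {-D-\<gamma>..D+\<gamma>}"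
proof (intro allI impI)
  fix \<tau> assume h: "1 \<le> \<tau> \<and> \<tau> \<le> j"
  then obtain k where k: "\<tau> = Suc k" by (cases \<tau>) auto
  have "Suc k \<le> j \<longrightarrow> \<epsilon> (Suc k) \<in> {-D-\<gamma>..D+\<gamma>}"
  proof (induction k)
    case 0 then show ?case using assms(6) by simp
  next
    case (Suc k)
    show ?case
    proof
      assume kj: "Suc (Suc k) \<le> j"
      have ih: "\<epsilon> (Suc k) \<in> {-D-\<gamma>..D+\<gamma>}" using Suc kj by simp
      have uk: "u (Suc k) \<in> {0..1}" using assms(5) kj by simp
      have rec: "\<epsilon> (Suc k + 1) = \<epsilon> (Suc k) -
             (if sf_grad D (u (Suc k)) (\<epsilon> (Suc k)) = 0 then 0
              else \<gamma> * sf_grad D (u (Suc k)) (\<epsilon> (Suc k)) /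
                   sqrt (\<Sum>t=1..Suc k. (sf_grad D (u t) (\<epsilon> t))\<^sup>2))"
        using assms(7) kj by simp
      have Sge: "(sf_grad D (u (Suc k)) (\<epsilon> (Suc k)))\<^sup>2 \<le> (\<Sum>t=1..Suc k. (sf_grad D (u t) (\<epsilon> t))\<^sup>2)"
        by (rule member_le_sum) auto
      have "\<epsilon> (Suc k + 1) \<in> {-D-\<gamma>..D+\<gamma>}"
        unfolding rec by (rule step_ok[OF assms(1-4) uk ih Sge])
      then show "\<epsilon> (Suc (Suc k)) \<in> {-D-\<gamma>..D+\<gamma>}" by simp
    qed
  qed
  then show "\<epsilon> \<tau> \<in> {-D-\<gamma>..D+\<gamma>}" using h k by simp
qed

end
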